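(* Let $(\mathcal{X},\mathcal{E})$ be a measurable space with a positive measure $\mu$, let $\mathcal{K}:\mathcal{X}\times\mathcal{X}\to\mathbb{R}$ be a function, and let $\mathcal{A}$ be a procedure such that for every $k\ge1$ and every $\mathbf{Y}_k=(Y_1,\dots,Y_k)\in\mathcal{X}^k$, $\mathcal{A}(\mathbf{Y}_k)(x)=\frac1k\sum_{i=1}^k\mathcal{K}(x,Y_i)$ for all $x\in\mathcal{X}$, and $\mathcal{A}(\mathbf{Y}_k)$ is a probability density with respect to $\mu$. Let $V\ge2$ and $n=pV$ with $p\ge1$ an integer, let $\mathbf{X}=(X_1,\dots,X_n)\in\mathcal{X}^n$ and partition $\mathbf{X}$ into $V$ disjoint subsamples $\mathbf{X}_1,\dots,\mathbf{X}_V$, each of size $p$, with $\mathbf{X}_j^c=\mathbf{X}\setminus\mathbf{X}_j$. Set $\widehat{s}=\mathcal{A}(\mathbf{X})$ and $\widehat{s}_j=\mathcal{A}(\mathbf{X}_j^c)$. Then for every probability $P_s$ on $\mathcal{X}$, \[ h^2(s,\widehat{s})\le\frac1V\sum_{j=1}^V h^2(s,\widehat{s}_j). \]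
   Context: For probabilities $P,Q$ on $\mathcal{X}$, the Hellinger distance is $h(P,Q)=\left[\frac12\int(\sqrt{dP}-\sqrt{dQ})^2\right]^{1/2}$, where $dP,dQ$ are densities with respect to any dominating measure; for a density $t$ with respect to $\mu$ one writes $h(s,t)$ for $h(P_s,t\cdot\mu)$. A procedure is a measurable mapping from $\bigcup_{k\ge1}\mathcal{X}^k$ to the set of probability densities with respect to $\mu$. *)

theory Defs
  imports "HOL-Probability.Probability"
begin

definition sum_meas :: "'a measure \<Rightarrow> 'a measure \<Rightarrow> 'a measure" where
  "sum_meas P Q = measure_of (space P) (sets P) (\<lambda>A. emeasure P A + emeasure Q A)"

definition hellinger_sq :: "'a measure \<Rightarrow> 'a measure \<Rightarrow> real" where
  "hellinger_sq P Q =
    (let \<nu> = sum_meas P Q in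
     enn2real ((1/2) * (\<integral>\<^sup>+ x. ennreal ((sqrt (enn2real (RN_deriv \<nu> P x))
                                   - sqrt (enn2real (RN_deriv \<nu> Q x)))\<^sup>2) \<partial>\<nu>)))"

definition prob_density :: "'a measure \<Rightarrow> ('a \<Rightarrow> real) \<Rightarrow> bool" where
  "prob_density \<mu> t \<longleftrightarrow> t \<in> borel_measurable \<mu> \<and> (\<forall>x\<in>space \<mu>. 0 \<le> t x)
      \<and> (\<integral>\<^sup>+ x. ennreal (t x) \<partial>\<mu>) = 1"

end

theory Submission
  imports Defs
begin


lemma sets_sum_meas[simp]: "sets (sum_meas P Q) = sets P"
  unfolding sum_meas_def by (simp add: sets.sigma_sets_eq)

lemma space_sum_meas[simp]: "space (sum_meas P Q) = space P"
  unfolding sum_meas_def by (simp add: sets.space_closed)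

lemma emeasure_sum_meas:
  assumes "sets Q = sets P" "A \<in> sets P"
  shows "emeasure (sum_meas P Q) A = emeasure P A + emeasure Q A"
  unfolding sum_meas_def
proof (rule emeasure_measure_of_sigma)
  show "sigma_algebra (space P) (sets P)" by (rule sets.sigma_algebra_axioms)
  show "positive (sets P) (\<lambda>A. emeasure P A + emeasure Q A)"
    by (simp add: positive_def)
  show "countably_additive (sets P) (\<lambda>A. emeasure P A + emeasure Q A)"
    unfolding countably_additive_def
  proof (intro allI impI)
    fix F :: "nat \<Rightarrow> _" assume F: "range F \<subseteq> sets P" "disjoint_family F"
    then have F': "range F \<subseteq> sets Q" using assms by simp
    show "(\<Sum>i. emeasure P (F i) + emeasure Q (F i)) = emeasure P (\<Union> (range F)) + emeasure Q (\<Union> (range F))"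
      using suminf_emeasure[OF F] suminf_emeasure[OF F' F(2)]
      by (simp add: suminf_add[symmetric])
  qed
qed (use assms in auto)



lemma hellinger_density:
  fixes p q :: "'a \<Rightarrow> real"
  assumes pm: "p \<in> borel_measurable L" and qm: "q \<in> borel_measurable L"
    and p0: "\<And>x. x \<in> space L \<Longrightarrow> 0 \<le> p x" and q0: "\<And>x. x \<in> space L \<Longrightarrow> 0 \<le> q x"
    and PL: "P = density L (\<lambda>x. ennreal (p x))" and QL: "Q = density L (\<lambda>x. ennreal (q x))"
    and fP: "finite_measure P" and fQ: "finite_measure Q"
  shows "hellinger_sq P Q = enn2real ((1/2) * (\<integral>\<^sup>+ x. ennreal ((sqrt (p x) - sqrt (q x))\<^sup>2) \<partial>L))"
proof -
  define \<nu> where "\<nu> = sum_meas P Q"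
  have sP: "sets P = sets L" and sQ: "sets Q = sets L" using PL QL by auto
  have sn: "sets \<nu> = sets L" unfolding \<nu>_def using sP by simp
  have spn: "space \<nu> = space L" unfolding \<nu>_def using PL by simp
  have hnu: "\<nu> = density L (\<lambda>x. ennreal (p x + q x))"
  proof (rule measure_eqI)
    show "sets \<nu> = sets (density L (\<lambda>x. ennreal (p x + q x)))" using sn by simp
    fix A assume "A \<in> sets \<nu>"
    then have A: "A \<in> sets L" using sn by simp
    have "emeasure \<nu> A = emeasure P A + emeasure Q A"
      unfolding \<nu>_def using sP sQ A by (simp add: emeasure_sum_meas)
    also have "\<dots> = (\<integral>\<^sup>+ x. ennreal (p x) * indicator A x \<partial>L) + (\<integral>\<^sup>+ x. ennreal (q x) * indicator A x \<partial>L)"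
      using A PL QL pm qm by (simp add: emeasure_density)
    also have "\<dots> = (\<integral>\<^sup>+ x. ennreal (p x) * indicator A x + ennreal (q x) * indicator A x \<partial>L)"
      using A pm qm by (intro nn_integral_add[symmetric]) auto
    also have "\<dots> = (\<integral>\<^sup>+ x. ennreal (p x + q x) * indicator A x \<partial>L)"
      by (intro nn_integral_cong) (simp add: p0 q0 ennreal_plus distrib_right)
    also have "\<dots> = emeasure (density L (\<lambda>x. ennreal (p x + q x))) A"
      using A pm qm by (simp add: emeasure_density)
    finally show "emeasure \<nu> A = emeasure (density L (\<lambda>x. ennreal (p x + q x))) A" .
  qed
  define g where "g x = (if p x + q x = 0 then 0 else p x / (p x + q x))" for x
  define gq where "gq x = (if p x + q x = 0 then 0 else q x / (p x + q x))" for x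
  have gm: "g \<in> borel_measurable L" unfolding g_def using pm qm by measurable
  have gqm: "gq \<in> borel_measurable L" unfolding gq_def using pm qm by measurable
  have g0: "\<And>x. x \<in> space L \<Longrightarrow> 0 \<le> g x" unfolding g_def using p0 q0 by auto
  have gq0: "\<And>x. x \<in> space L \<Longrightarrow> 0 \<le> gq x" unfolding gq_def using p0 q0 by auto
  have finnu: "finite_measure \<nu>"
  proof (rule finite_measureI)
    have "emeasure \<nu> (space \<nu>) = emeasure P (space L) + emeasure Q (space L)"
      unfolding \<nu>_def using sP sQ spn \<nu>_def by (simp add: emeasure_sum_meas)
    also have "\<dots> < \<infinity>"
      using finite_measure.emeasure_finite[OF fP, of "space L"] finite_measure.emeasure_finite[OF fQ, of "space L"]
      by (simp add: less_top)
    finally show "emeasure \<nu> (space \<nu>) \<noteq> \<infinity>" by simp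
  qed
  have dP: "density \<nu> (\<lambda>x. ennreal (g x)) = P"
  proof -
    have "density \<nu> (\<lambda>x. ennreal (g x)) = density L (\<lambda>x. ennreal (p x + q x) * ennreal (g x))"
      unfolding hnu using pm qm gm by (intro density_density_eq) auto
    also have "\<dots> = density L (\<lambda>x. ennreal (p x))"
      using pm qm gm
      by (intro density_cong) (auto simp: g_def p0 q0 ennreal_mult'[symmetric] add_nonneg_eq_0_iff simp del: ennreal_plus)
    finally show ?thesis using PL by simp
  qed
  have dQ: "density \<nu> (\<lambda>x. ennreal (gq x)) = Q"
  proof -
    have "density \<nu> (\<lambda>x. ennreal (gq x)) = density L (\<lambda>x. ennreal (p x + q x) * ennreal (gq x))"
      unfolding hnu using pm qm gqm by (intro density_density_eq) auto
    also have "\<dots> = density L (\<lambda>x. ennreal (q x))"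
      using pm qm gqm
      by (intro density_cong) (auto simp: gq_def p0 q0 ennreal_mult'[symmetric] add_nonneg_eq_0_iff simp del: ennreal_plus)
    finally show ?thesis using QL by simp
  qed
  have gmn: "g \<in> borel_measurable \<nu>" using gm measurable_cong_sets[OF sn refl] by blast
  have gqmn: "gq \<in> borel_measurable \<nu>" using gqm measurable_cong_sets[OF sn refl] by blast
  have aeP: "AE x in \<nu>. ennreal (g x) = RN_deriv \<nu> P x"
    by (rule RN_deriv_unique_sigma_finite[OF _ dP]) (use gmn fP in \<open>auto simp: finite_measure_def\<close>)
  have aeQ: "AE x in \<nu>. ennreal (gq x) = RN_deriv \<nu> Q x"
    by (rule RN_deriv_unique_sigma_finite[OF _ dQ]) (use gqmn fQ in \<open>auto simp: finite_measure_def\<close>)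
  have "(\<integral>\<^sup>+ x. ennreal ((sqrt (enn2real (RN_deriv \<nu> P x)) - sqrt (enn2real (RN_deriv \<nu> Q x)))\<^sup>2) \<partial>\<nu>)
      = (\<integral>\<^sup>+ x. ennreal ((sqrt (g x) - sqrt (gq x))\<^sup>2) \<partial>\<nu>)"
  proof (rule nn_integral_cong_AE)
    show "AE x in \<nu>. ennreal ((sqrt (enn2real (RN_deriv \<nu> P x)) - sqrt (enn2real (RN_deriv \<nu> Q x)))\<^sup>2) = ennreal ((sqrt (g x) - sqrt (gq x))\<^sup>2)"
      using aeP aeQ AE_space
    proof eventually_elim
      case (elim x)
      then have "x \<in> space L" using spn by simp
      then show ?case using elim g0 gq0 by (metis enn2real_ennreal)
    qed
  qed
  also have "\<dots> = (\<integral>\<^sup>+ x. ennreal (p x + q x) * ennreal ((sqrt (g x) - sqrt (gq x))\<^sup>2) \<partial>L)"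
    unfolding hnu using pm qm gm gqm by (intro nn_integral_density) auto
  also have "\<dots> = (\<integral>\<^sup>+ x. ennreal ((sqrt (p x) - sqrt (q x))\<^sup>2) \<partial>L)"
  proof (rule nn_integral_cong)
    fix x assume x: "x \<in> space L"
    have "(p x + q x) * (sqrt (g x) - sqrt (gq x))\<^sup>2 = (sqrt (p x) - sqrt (q x))\<^sup>2"
    proof (cases "p x + q x = 0")
      case True then show ?thesis using p0[OF x] q0[OF x] g_def gq_def by auto
    next
      case False
      then have s: "p x + q x > 0" using p0[OF x] q0[OF x] by linarith
      have "sqrt (g x) = sqrt (p x) / sqrt (p x + q x)" using False by (simp add: g_def real_sqrt_divide)
      moreover have "sqrt (gq x) = sqrt (q x) / sqrt (p x + q x)" using False by (simp add: gq_def real_sqrt_divide)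
      ultimately have e: "sqrt (g x) - sqrt (gq x) = (sqrt (p x) - sqrt (q x)) / sqrt (p x + q x)"
        by (simp add: diff_divide_distrib)
      have "(sqrt (p x + q x))\<^sup>2 = p x + q x" using s by simp
      then show ?thesis unfolding e using s by (simp add: power_divide)
    qed
    then show "ennreal (p x + q x) * ennreal ((sqrt (g x) - sqrt (gq x))\<^sup>2) = ennreal ((sqrt (p x) - sqrt (q x))\<^sup>2)"
      using p0[OF x] q0[OF x] by (metis add_nonneg_nonneg ennreal_mult' zero_le_power2)
  qed
  finally show ?thesis unfolding hellinger_sq_def Let_def \<nu>_def[symmetric] by simp
qed



lemma cs_sum:
  fixes s :: "nat \<Rightarrow> real"
  shows "(\<Sum>j<V. s j)\<^sup>2 \<le> real V * (\<Sum>j<V. (s j)\<^sup>2)"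
proof -
  have "(\<Sum>j<V. s j)\<^sup>2 = (\<Sum>j<V. \<Sum>k<V. s j * s k)"
    by (simp add: power2_eq_square sum_product)
  also have "\<dots> \<le> (\<Sum>j<V. \<Sum>k<V. ((s j)\<^sup>2 + (s k)\<^sup>2) / 2)"
  proof (intro sum_mono)
    fix j k
    have "0 \<le> (s j - s k)\<^sup>2" by simp
    then show "s j * s k \<le> ((s j)\<^sup>2 + (s k)\<^sup>2) / 2" by (simp add: power2_eq_square algebra_simps)
  qed
  also have "\<dots> = (\<Sum>j<V. (real V * (s j)\<^sup>2 + (\<Sum>k<V. (s k)\<^sup>2)) / 2)"
    by (simp add: sum_divide_distrib[symmetric] sum.distrib)
  also have "\<dots> = real V * (\<Sum>j<V. (s j)\<^sup>2)"
    by (simp add: sum_divide_distrib[symmetric] sum.distrib sum_distrib_left[symmetric])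
  finally show ?thesis .
qed

lemma convex_pt:
  fixes a :: real and b :: "nat \<Rightarrow> real"
  assumes V: "V > 0" and a: "0 \<le> a" and b: "\<And>j. j < V \<Longrightarrow> 0 \<le> b j"
  shows "(sqrt a - sqrt ((1 / real V) * (\<Sum>j<V. b j)))\<^sup>2 \<le> (1 / real V) * (\<Sum>j<V. (sqrt a - sqrt (b j))\<^sup>2)"
proof -
  define m where "m = (1 / real V) * (\<Sum>j<V. b j)"
  have m0: "0 \<le> m" unfolding m_def using b by (auto intro!: sum_nonneg divide_nonneg_nonneg)
  have bs: "\<And>j. j < V \<Longrightarrow> (sqrt (b j))\<^sup>2 = b j" using b by simp
  have "((1 / real V) * (\<Sum>j<V. sqrt (b j)))\<^sup>2 = (\<Sum>j<V. sqrt (b j))\<^sup>2 / (real V)\<^sup>2"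
    by (simp add: power_divide)
  also have "\<dots> \<le> real V * (\<Sum>j<V. (sqrt (b j))\<^sup>2) / (real V)\<^sup>2"
    by (intro divide_right_mono cs_sum) simp
  also have "\<dots> = m"
  proof -
    have "(\<Sum>j<V. (sqrt (b j))\<^sup>2) = (\<Sum>j<V. b j)" using bs by (intro sum.cong) auto
    then show ?thesis unfolding m_def using V by (simp add: power2_eq_square)
  qed
  finally have avg: "(1 / real V) * (\<Sum>j<V. sqrt (b j)) \<le> sqrt m" by (rule real_le_rsqrt)
  have "(sqrt a - sqrt m)\<^sup>2 = a + m - 2 * sqrt a * sqrt m" using a m0
    by (simp add: power2_diff)
  also have "\<dots> \<le> a + m - 2 * sqrt a * ((1 / real V) * (\<Sum>j<V. sqrt (b j)))"
    using mult_left_mono[OF avg, of "2 * sqrt a"] a by simp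
  also have "\<dots> = (1 / real V) * (\<Sum>j<V. (sqrt a - sqrt (b j))\<^sup>2)"
  proof -
    have "(\<Sum>j<V. (sqrt a - sqrt (b j))\<^sup>2) = (\<Sum>j<V. a + b j - 2 * sqrt a * sqrt (b j))"
      using a b by (intro sum.cong) (auto simp: power2_diff)
    also have "\<dots> = real V * a + (\<Sum>j<V. b j) - 2 * sqrt a * (\<Sum>j<V. sqrt (b j))"
      by (simp add: sum.distrib sum_subtractf sum_distrib_left)
    finally have E: "(\<Sum>j<V. (sqrt a - sqrt (b j))\<^sup>2) = real V * a + (\<Sum>j<V. b j) - 2 * sqrt a * (\<Sum>j<V. sqrt (b j))" .
    have "(1 / real V) * (real V * a + (\<Sum>j<V. b j) - 2 * sqrt a * (\<Sum>j<V. sqrt (b j)))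
       = a + (1 / real V) * (\<Sum>j<V. b j) - 2 * sqrt a * ((1 / real V) * (\<Sum>j<V. sqrt (b j)))"
      using V by (simp add: right_diff_distrib distrib_left)
    then show ?thesis unfolding m_def E by simp
  qed
  finally show ?thesis unfolding m_def .
qed



lemma sum_list_nths:
  "sum_list (map f (nths l A)) = (\<Sum>i\<in> A \<inter> {..<length l}. f (l!i))"
proof (induction l rule: rev_induct)
  case Nil then show ?case by simp
next
  case (snoc x xs)
  have e: "(\<Sum>i\<in> A \<inter> {..<length xs}. f ((xs @ [x])!i)) = (\<Sum>i\<in> A \<inter> {..<length xs}. f (xs!i))"
    by (intro sum.cong) (auto simp: nth_append)
  show ?case
  proof (cases "length xs \<in> A")
    case True
    then have "A \<inter> {..<length (xs @ [x])} = insert (length xs) (A \<inter> {..<length xs})"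
      by (auto simp: lessThan_Suc)
    then show ?thesis using True snoc e by (simp add: nths_append add.commute)
  next
    case False
    then have "A \<inter> {..<length (xs @ [x])} = A \<inter> {..<length xs}"
      by (auto simp: lessThan_Suc)
    then show ?thesis using False snoc e by (simp add: nths_append)
  qed
qed

lemma sum_nth_list: "(\<Sum>i<length ys. f (ys ! i)) = sum_list (map f ys)"
  by (simp add: sum_list_sum_nth atLeast0LessThan)



lemma partition_unique:
  fixes B :: "nat \<Rightarrow> nat set"
  assumes n: "n = p * V"
    and B_sub: "\<And>j. j < V \<Longrightarrow> B j \<subseteq> {0..<n}"
    and B_card: "\<And>j. j < V \<Longrightarrow> card (B j) = p"
    and B_disj: "\<And>j k. j < V \<Longrightarrow> k < V \<Longrightarrow> j \<noteq> k \<Longrightarrow> B j \<inter> B k = {}"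
    and i: "i < n"
  shows "\<exists>j0. j0 < V \<and> {j. j < V \<and> i \<in> B j} = {j0}"
proof -
  have fin: "\<And>j. j < V \<Longrightarrow> finite (B j)" using B_sub finite_subset by blast
  have "card (\<Union>j\<in>{..<V}. B j) = (\<Sum>j\<in>{..<V}. card (B j))"
    by (rule card_UN_disjoint) (use fin B_disj in auto)
  also have "\<dots> = n" using B_card n by simp
  finally have c: "card (\<Union>j\<in>{..<V}. B j) = card {0..<n}" by simp
  have "(\<Union>j\<in>{..<V}. B j) = {0..<n}"
    by (rule card_subset_eq) (use B_sub c in auto)
  then have "i \<in> (\<Union>j\<in>{..<V}. B j)" using i by simp
  then obtain j0 where j0: "j0 < V" "i \<in> B j0" by auto
  have "{j. j < V \<and> i \<in> B j} = {j0}"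
    using j0 B_disj by blast
  then show ?thesis using j0 by blast
qed

lemma avg_identity:
  fixes B :: "nat \<Rightarrow> nat set" and k :: "nat \<Rightarrow> real"
  assumes V: "V \<ge> 2" and p: "p \<ge> 1" and n: "n = p * V"
    and B_sub: "\<And>j. j < V \<Longrightarrow> B j \<subseteq> {0..<n}"
    and B_card: "\<And>j. j < V \<Longrightarrow> card (B j) = p"
    and B_disj: "\<And>j k. j < V \<Longrightarrow> k < V \<Longrightarrow> j \<noteq> k \<Longrightarrow> B j \<inter> B k = {}"
  shows "(1 / real n) * (\<Sum>i<n. k i)
       = (1 / real V) * (\<Sum>j<V. (1 / real (n - p)) * (\<Sum>i\<in>({0..<n} - B j) \<inter> {..<n}. k i))"
proof -
  have "(\<Sum>j<V. (\<Sum>i\<in>({0..<n} - B j) \<inter> {..<n}. k i)) = (\<Sum>j<V. \<Sum>i<n. (if i \<in> B j then 0 else k i))"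
  proof (rule sum.cong[OF refl])
    fix j
    have "({0..<n} - B j) \<inter> {..<n} = {i \<in> {..<n}. i \<notin> B j}" by auto
    show "(\<Sum>i\<in>({0..<n} - B j) \<inter> {..<n}. k i) = (\<Sum>i<n. (if i \<in> B j then 0 else k i))"
    proof -
      have "(\<Sum>i<n. (if i \<in> B j then 0 else k i)) = (\<Sum>i<n. (if i \<notin> B j then k i else 0))"
        by (intro sum.cong) auto
      also have "\<dots> = (\<Sum>i\<in>{i \<in> {..<n}. i \<notin> B j}. k i)"
        by (simp only: sum.inter_filter[symmetric] finite_lessThan)
      finally show ?thesis using \<open>({0..<n} - B j) \<inter> {..<n} = {i \<in> {..<n}. i \<notin> B j}\<close> by simp
    qed
  qed
  also have "\<dots> = (\<Sum>i<n. \<Sum>j<V. (if i \<in> B j then 0 else k i))" by (rule sum.swap)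
  also have "\<dots> = (\<Sum>i<n. (real V - 1) * k i)"
  proof (rule sum.cong[OF refl])
    fix i assume "i \<in> {..<n}"
    then obtain j0 where j0: "j0 < V" "{j. j < V \<and> i \<in> B j} = {j0}"
      using partition_unique[of n p V B, OF n B_sub B_card B_disj] by blast
    have "(\<Sum>j<V. (if i \<in> B j then 0 else k i)) = (\<Sum>j<V. k i - (if i \<in> B j then k i else 0))"
      by (intro sum.cong) auto
    also have "\<dots> = real V * k i - (\<Sum>j<V. (if i \<in> B j then k i else 0))"
      by (simp add: sum_subtractf)
    also have "(\<Sum>j<V. (if i \<in> B j then k i else 0)) = (\<Sum>j\<in>{j \<in> {..<V}. i \<in> B j}. k i)"
      by (simp only: sum.inter_filter[symmetric] finite_lessThan)
    also have "{j \<in> {..<V}. i \<in> B j} = {j0}" using j0 by auto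
    finally show "(\<Sum>j<V. (if i \<in> B j then 0 else k i)) = (real V - 1) * k i"
      by (simp add: algebra_simps)
  qed
  also have "\<dots> = (real V - 1) * (\<Sum>i<n. k i)" by (simp add: sum_distrib_left)
  finally have S: "(\<Sum>j<V. (\<Sum>i\<in>({0..<n} - B j) \<inter> {..<n}. k i)) = (real V - 1) * (\<Sum>i<n. k i)" .
  have np: "real (n - p) = real p * (real V - 1)"
    using n V by (simp add: of_nat_diff algebra_simps)
  have Vp: "real V - 1 > 0" using V by simp
  have pp: "real p > 0" using p by simp
  have "(1 / real V) * (\<Sum>j<V. (1 / real (n - p)) * (\<Sum>i\<in>({0..<n} - B j) \<inter> {..<n}. k i))
      = (1 / real V) * ((1 / real (n - p)) * ((real V - 1) * (\<Sum>i<n. k i)))"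
    by (simp only: sum_distrib_left[symmetric] S)
  also have "\<dots> = (1 / real n) * (\<Sum>i<n. k i)"
    unfolding np using Vp pp n by (simp add: field_simps)
  finally show ?thesis by simp
qed



lemma emeasure_density_space_nn:
  assumes "f \<in> borel_measurable M"
  shows "emeasure (density M f) (space M) = (\<integral>\<^sup>+ x. f x \<partial>M)"
proof -
  have "emeasure (density M f) (space M) = (\<integral>\<^sup>+ x. f x * indicator (space M) x \<partial>M)"
    by (rule emeasure_density[OF assms]) simp
  also have "\<dots> = (\<integral>\<^sup>+ x. f x \<partial>M)" by (rule nn_integral_cong) simp
  finally show ?thesis .
qed

lemma prob_density_total:
  assumes "prob_density \<mu> f"
  shows "emeasure (density \<mu> (\<lambda>x. ennreal (f x))) (space \<mu>) = 1"
    and "finite_measure (density \<mu> (\<lambda>x. ennreal (f x)))"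
proof -
  show 1: "emeasure (density \<mu> (\<lambda>x. ennreal (f x))) (space \<mu>) = 1"
    using assms unfolding prob_density_def by (simp add: emeasure_density_space_nn)
  show "finite_measure (density \<mu> (\<lambda>x. ennreal (f x)))"
    by (rule finite_measureI) (use 1 in simp)
qed

lemma RN_real:
  assumes L: "sigma_finite_measure L" and N: "finite_measure N"
    and ac: "absolutely_continuous L N" and s: "sets N = sets L"
  shows "N = density L (\<lambda>x. ennreal (enn2real (RN_deriv L N x)))"
proof -
  interpret L: sigma_finite_measure L by fact
  have "density L (RN_deriv L N) = N" by (rule L.density_RN_deriv[OF ac s])
  moreover have "density L (RN_deriv L N) = density L (\<lambda>x. ennreal (enn2real (RN_deriv L N x)))"
  proof (rule density_cong)
    show "AE x in L. RN_deriv L N x = ennreal (enn2real (RN_deriv L N x))"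
      using L.RN_deriv_finite[OF finite_measure.sigma_finite_measure[OF N] ac s]
      by eventually_elim (auto simp: less_top)
  qed auto
  ultimately show ?thesis by simp
qed

lemma density_factor:
  fixes S m f :: "'a \<Rightarrow> real"
  assumes sL: "sets L = sets \<mu>"
    and Sm: "S \<in> borel_measurable \<mu>" and S0: "\<And>x. x \<in> space \<mu> \<Longrightarrow> 0 \<le> S x"
    and hML: "density \<mu> (\<lambda>x. ennreal (S x)) = density L (\<lambda>x. ennreal (m x))"
    and mm: "m \<in> borel_measurable L" and m0: "\<And>x. x \<in> space L \<Longrightarrow> 0 \<le> m x"
    and fm: "f \<in> borel_measurable \<mu>" and f0: "\<And>x. x \<in> space \<mu> \<Longrightarrow> 0 \<le> f x"
    and fS: "\<And>x. x \<in> space \<mu> \<Longrightarrow> S x = 0 \<Longrightarrow> f x = 0"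
  shows "density \<mu> (\<lambda>x. ennreal (f x))
       = density L (\<lambda>x. ennreal (m x * (f x / S x)))"
proof -
  define r where "r x = f x / S x" for x
  have rm: "r \<in> borel_measurable \<mu>" unfolding r_def by (intro borel_measurable_divide fm Sm)
  have rmL: "r \<in> borel_measurable L" using rm measurable_cong_sets[OF sL refl] by blast
  have spL: "space L = space \<mu>" using sL by (rule sets_eq_imp_space_eq)
  have r0: "\<And>x. x \<in> space \<mu> \<Longrightarrow> 0 \<le> r x" unfolding r_def using S0 f0 by auto
  have "density \<mu> (\<lambda>x. ennreal (f x)) = density \<mu> (\<lambda>x. ennreal (S x) * ennreal (r x))"
  proof (rule density_cong)
    show "AE x in \<mu>. ennreal (f x) = ennreal (S x) * ennreal (r x)"
    proof (rule AE_I2)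
      fix x assume x: "x \<in> space \<mu>"
      show "ennreal (f x) = ennreal (S x) * ennreal (r x)"
      proof (cases "S x = 0")
        case True then show ?thesis using fS[OF x] by (simp add: r_def)
      next
        case False
        then have "S x * r x = f x" by (simp add: r_def)
        then show ?thesis using r0[OF x] by (metis ennreal_mult'')
      qed
    qed
  qed (use fm Sm rm in auto)
  also have "\<dots> = density (density \<mu> (\<lambda>x. ennreal (S x))) (\<lambda>x. ennreal (r x))"
    using Sm rm by (intro density_density_eq[symmetric]) auto
  also have "\<dots> = density (density L (\<lambda>x. ennreal (m x))) (\<lambda>x. ennreal (r x))"
    unfolding hML ..
  also have "\<dots> = density L (\<lambda>x. ennreal (m x) * ennreal (r x))"
    using mm rmL by (intro density_density_eq) auto
  also have "\<dots> = density L (\<lambda>x. ennreal (m x * r x))"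
    by (intro density_cong) (use mm rmL r0 spL in \<open>auto simp: ennreal_mult''\<close>)
  finally show ?thesis unfolding r_def .
qed

lemma sq_diff_le:
  fixes a b :: real assumes "0 \<le> a" "0 \<le> b"
  shows "(sqrt a - sqrt b)\<^sup>2 \<le> a + b"
proof -
  have "(sqrt a - sqrt b)\<^sup>2 = (sqrt a)\<^sup>2 + (sqrt b)\<^sup>2 - 2 * sqrt a * sqrt b" by (rule power2_diff)
  also have "\<dots> = a + b - 2 * sqrt a * sqrt b" using assms by simp
  also have "\<dots> \<le> a + b" using assms by simp
  finally show ?thesis .
qed



theorem proposition1:
  fixes \<mu> :: "'a measure" and K :: "'a \<Rightarrow> 'a \<Rightarrow> real"
    and A :: "'a list \<Rightarrow> 'a \<Rightarrow> real"
    and V p n :: nat and Xs :: "'a list" and B :: "nat \<Rightarrow> nat set"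
    and P :: "'a measure"
  assumes A_def: "\<And>ys x. length ys \<ge> 1 \<Longrightarrow> set ys \<subseteq> space \<mu> \<Longrightarrow> x \<in> space \<mu> \<Longrightarrow>
                     A ys x = (1 / real (length ys)) * (\<Sum>i<length ys. K x (ys ! i))"
    and A_dens: "\<And>ys. length ys \<ge> 1 \<Longrightarrow> set ys \<subseteq> space \<mu> \<Longrightarrow> prob_density \<mu> (A ys)"
    and V: "V \<ge> 2" and p: "p \<ge> 1" and n: "n = p * V"
    and Xs: "length Xs = n" "set Xs \<subseteq> space \<mu>"
    and B_sub: "\<And>j. j < V \<Longrightarrow> B j \<subseteq> {0..<n}"
    and B_card: "\<And>j. j < V \<Longrightarrow> card (B j) = p"
    and B_disj: "\<And>j k. j < V \<Longrightarrow> k < V \<Longrightarrow> j \<noteq> k \<Longrightarrow> B j \<inter> B k = {}"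
    and P: "prob_space P" "sets P = sets \<mu>"
  shows "hellinger_sq P (density \<mu> (A Xs))
           \<le> (1 / real V) * (\<Sum>j<V. hellinger_sq P (density \<mu> (A (nths Xs ({0..<n} - B j)))))"
proof -
  define Ys where "Ys j = nths Xs ({0..<n} - B j)" for j
  define q where "q j = A (Ys j)" for j
  define q0 where "q0 = A Xs"
  have n1: "n \<ge> 1" using n V p by simp
  have lenYs: "length (Ys j) = n - p" if "j < V" for j
  proof -
    have "{i. i < length Xs \<and> i \<in> {0..<n} - B j} = {0..<n} - B j" using Xs by auto
    moreover have "card ({0..<n} - B j) = n - p"
      using B_sub[OF that] B_card[OF that] by (simp add: card_Diff_subset finite_subset)
    ultimately show ?thesis unfolding Ys_def by (simp add: length_nths)
  qed
  have npe: "n - p = p * (V - 1)" using n by (simp add: diff_mult_distrib2)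
  have np1: "n - p \<ge> 1" unfolding npe using p V by simp
  have setYs: "set (Ys j) \<subseteq> space \<mu>" for j
    unfolding Ys_def by (rule order_trans[OF set_nths_subset Xs(2)])
  have dq: "prob_density \<mu> (q j)" if "j < V" for j
    unfolding q_def by (rule A_dens) (use lenYs[OF that] np1 setYs in auto)
  have dq0: "prob_density \<mu> q0"
    unfolding q0_def by (rule A_dens) (use Xs n1 in auto)
  have avg: "q0 x = (1 / real V) * (\<Sum>j<V. q j x)" if x: "x \<in> space \<mu>" for x
  proof -
    have "q0 x = (1 / real n) * (\<Sum>i<n. K x (Xs ! i))"
      unfolding q0_def using A_def[of Xs x, OF _ Xs(2) x] Xs(1) n1 by (simp only: order_refl)
    also have "\<dots> = (1 / real V) * (\<Sum>j<V. (1 / real (n - p)) * (\<Sum>i\<in>({0..<n} - B j) \<inter> {..<n}. K x (Xs ! i)))"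
      by (rule avg_identity[OF V p n B_sub B_card B_disj])
    also have "\<dots> = (1 / real V) * (\<Sum>j<V. q j x)"
    proof -
      have "(1 / real (n - p)) * (\<Sum>i\<in>({0..<n} - B j) \<inter> {..<n}. K x (Xs ! i)) = q j x" if j: "j < V" for j
      proof -
        have "q j x = (1 / real (n - p)) * (\<Sum>i<length (Ys j). K x (Ys j ! i))"
          unfolding q_def using A_def[of "Ys j" x, OF _ setYs x] lenYs[OF j] np1 by (simp only:)
        also have "(\<Sum>i<length (Ys j). K x (Ys j ! i)) = sum_list (map (K x) (Ys j))"
          by (rule sum_nth_list)
        also have "\<dots> = (\<Sum>i\<in>({0..<n} - B j) \<inter> {..<n}. K x (Xs ! i))"
          unfolding Ys_def sum_list_nths Xs(1) ..
        finally show ?thesis by simp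
      qed
      then show ?thesis by simp
    qed
    finally show ?thesis .
  qed

  have qm: "q j \<in> borel_measurable \<mu>" and qnn: "\<And>x. x \<in> space \<mu> \<Longrightarrow> 0 \<le> q j x" if "j < V" for j
    using dq[OF that] unfolding prob_density_def by auto
  have q0m: "q0 \<in> borel_measurable \<mu>" and q0nn: "\<And>x. x \<in> space \<mu> \<Longrightarrow> 0 \<le> q0 x"
    using dq0 unfolding prob_density_def by auto
  define S where "S x = (\<Sum>j<V. q j x)" for x
  have Sm: "S \<in> borel_measurable \<mu>" unfolding S_def using qm by (intro borel_measurable_sum) auto
  have S0: "0 \<le> S x" if "x \<in> space \<mu>" for x unfolding S_def using qnn that by (intro sum_nonneg) auto
  have qS: "q j x = 0" if "x \<in> space \<mu>" "S x = 0" "j < V" for x j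
  proof -
    have "\<forall>j\<in>{..<V}. q j x = 0"
      using that qnn sum_nonneg_eq_0_iff[of "{..<V}" "\<lambda>j. q j x"] unfolding S_def by auto
    then show ?thesis using that by auto
  qed
  have q0S: "q0 x = 0" if "x \<in> space \<mu>" "S x = 0" for x
    using avg[OF that(1)] that unfolding S_def by simp
  define M where "M = density \<mu> (\<lambda>x. ennreal (S x))"
  have sM: "sets M = sets \<mu>" unfolding M_def by simp
  have Mtot: "emeasure M (space \<mu>) = of_nat V"
  proof -
    have "emeasure M (space \<mu>) = (\<integral>\<^sup>+ x. ennreal (S x) \<partial>\<mu>)"
      unfolding M_def using Sm by (intro emeasure_density_space_nn) auto
    also have "\<dots> = (\<integral>\<^sup>+ x. (\<Sum>j<V. ennreal (q j x)) \<partial>\<mu>)"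
      unfolding S_def
    proof (intro nn_integral_cong)
      fix x assume x: "x \<in> space \<mu>"
      show "ennreal (\<Sum>j<V. q j x) = (\<Sum>j<V. ennreal (q j x))"
        using sum_ennreal[of "{..<V}" "\<lambda>j. q j x"] qnn x by simp
    qed
    also have "\<dots> = (\<Sum>j<V. (\<integral>\<^sup>+ x. ennreal (q j x) \<partial>\<mu>))"
      using qm by (intro nn_integral_sum) auto
    also have "\<dots> = (\<Sum>j<V. 1)"
      using dq unfolding prob_density_def by (intro sum.cong) auto
    finally show ?thesis by simp
  qed
  have finM: "finite_measure M"
    by (rule finite_measureI) (use Mtot sets_eq_imp_space_eq[OF sM] in simp)
  interpret PP: prob_space P by (rule P(1))
  define L where "L = sum_meas P M"
  have sL: "sets L = sets \<mu>" unfolding L_def using P(2) by simp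
  have spL: "space L = space \<mu>" using sets_eq_imp_space_eq[OF sL] .
  have spP: "space P = space \<mu>" using sets_eq_imp_space_eq[OF P(2)] .
  have spM: "space M = space \<mu>" using sets_eq_imp_space_eq[OF sM] .
  have emL: "emeasure L X = emeasure P X + emeasure M X" if "X \<in> sets \<mu>" for X
    unfolding L_def using that P(2) sM by (intro emeasure_sum_meas) auto
  have finL: "finite_measure L"
  proof (rule finite_measureI)
    have "emeasure L (space L) = emeasure P (space \<mu>) + emeasure M (space \<mu>)"
      using emL[of "space \<mu>"] spL by simp
    also have "\<dots> < \<infinity>" using Mtot spP PP.emeasure_space_1 by (simp add: less_top[symmetric])
    finally show "emeasure L (space L) \<noteq> \<infinity>" by simp
  qed
  have sfL: "sigma_finite_measure L" using finL by (rule finite_measure.sigma_finite_measure)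
  have acP: "absolutely_continuous L P"
    unfolding absolutely_continuous_def
  proof
    fix X assume "X \<in> null_sets L"
    then have "X \<in> sets \<mu>" "emeasure L X = 0" using sL by auto
    then show "X \<in> null_sets P" using emL P(2) by auto
  qed
  have acM: "absolutely_continuous L M"
    unfolding absolutely_continuous_def
  proof
    fix X assume "X \<in> null_sets L"
    then have "X \<in> sets \<mu>" "emeasure L X = 0" using sL by auto
    then show "X \<in> null_sets M" using emL sM by auto
  qed
  have finP: "finite_measure P" by (rule finite_measureI) (simp add: PP.emeasure_space_1)
  define pp where "pp x = enn2real (RN_deriv L P x)" for x
  define mm where "mm x = enn2real (RN_deriv L M x)" for x
  have ppm: "pp \<in> borel_measurable L" unfolding pp_def by measurable
  have mmm: "mm \<in> borel_measurable L" unfolding mm_def by measurable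
  have pp0: "0 \<le> pp x" for x unfolding pp_def by simp
  have mm0: "0 \<le> mm x" for x unfolding mm_def by simp
  have PL: "P = density L (\<lambda>x. ennreal (pp x))"
    unfolding pp_def by (rule RN_real[OF sfL finP acP]) (use P sL in auto)
  have hML: "M = density L (\<lambda>x. ennreal (mm x))"
    unfolding mm_def by (rule RN_real[OF sfL finM acM]) (use sM sL in auto)
  define b where "b j x = mm x * (q j x / S x)" for j x
  define b0 where "b0 x = mm x * (q0 x / S x)" for x
  have QL: "density \<mu> (\<lambda>x. ennreal (q j x)) = density L (\<lambda>x. ennreal (b j x))" if "j < V" for j
    unfolding b_def
    by (rule density_factor[OF sL Sm S0 _ mmm mm0 qm[OF that] qnn[OF that] qS[OF _ _ that]])
       (use hML M_def in auto)
  have Q0L: "density \<mu> (\<lambda>x. ennreal (q0 x)) = density L (\<lambda>x. ennreal (b0 x))"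
    unfolding b0_def
    by (rule density_factor[OF sL Sm S0 _ mmm mm0 q0m q0nn q0S])
       (use hML M_def in auto)
  have qmL: "q j \<in> borel_measurable L" if "j < V" for j
    using qm[OF that] measurable_cong_sets[OF sL refl] by blast
  have q0mL: "q0 \<in> borel_measurable L"
    using q0m measurable_cong_sets[OF sL refl] by blast
  have SmL: "S \<in> borel_measurable L"
    using Sm measurable_cong_sets[OF sL refl] by blast
  have bm: "b j \<in> borel_measurable L" if "j < V" for j
    unfolding b_def by (intro borel_measurable_times mmm borel_measurable_divide qmL[OF that] SmL)
  have b0m: "b0 \<in> borel_measurable L"
    unfolding b0_def by (intro borel_measurable_times mmm borel_measurable_divide q0mL SmL)
  have bnn: "0 \<le> b j x" if "j < V" "x \<in> space L" for j x
    unfolding b_def using mm0 qnn[OF that(1)] S0 that(2) spL by (simp add: divide_nonneg_nonneg)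
  have b0nn: "0 \<le> b0 x" if "x \<in> space L" for x
    unfolding b0_def using mm0 q0nn S0 that spL by (simp add: divide_nonneg_nonneg)
  have avgb: "b0 x = (1 / real V) * (\<Sum>j<V. b j x)" if "x \<in> space L" for x
  proof -
    have "b0 x = mm x * (((1 / real V) * (\<Sum>j<V. q j x)) / S x)"
      unfolding b0_def using avg that spL by simp
    also have "\<dots> = (1 / real V) * (\<Sum>j<V. mm x * (q j x / S x))"
      by (simp add: sum_distrib_left sum_divide_distrib)
    finally show ?thesis unfolding b_def .
  qed
  define F where "F j x = (sqrt (pp x) - sqrt (b j x))\<^sup>2" for j x
  define F0 where "F0 x = (sqrt (pp x) - sqrt (b0 x))\<^sup>2" for x
  define I where "I j = (\<integral>\<^sup>+ x. ennreal (F j x) \<partial>L)" for j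
  define I0 where "I0 = (\<integral>\<^sup>+ x. ennreal (F0 x) \<partial>L)"
  have Fm: "(\<lambda>x. ennreal (F j x)) \<in> borel_measurable L" if "j < V" for j
    unfolding F_def using ppm bm[OF that] by measurable
  have H: "hellinger_sq P (density \<mu> (\<lambda>x. ennreal (q j x))) = enn2real ((1/2) * I j)" if "j < V" for j
  proof -
    have fq: "finite_measure (density L (\<lambda>x. ennreal (b j x)))"
      using prob_density_total(2)[OF dq[OF that]] unfolding QL[OF that] .
    show ?thesis unfolding I_def F_def QL[OF that] by (rule hellinger_density[OF ppm bm[OF that] pp0 bnn[OF that] PL refl finP fq])
  qed
  have H0: "hellinger_sq P (density \<mu> (\<lambda>x. ennreal (q0 x))) = enn2real ((1/2) * I0)"
  proof -
    have fq: "finite_measure (density L (\<lambda>x. ennreal (b0 x)))"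
      using prob_density_total(2)[OF dq0] unfolding Q0L .
    show ?thesis unfolding I0_def F0_def Q0L by (rule hellinger_density[OF ppm b0m pp0 b0nn PL refl finP fq])
  qed
  have intpp: "(\<integral>\<^sup>+ x. ennreal (pp x) \<partial>L) = 1"
  proof -
    have "(\<integral>\<^sup>+ x. ennreal (pp x) \<partial>L) = emeasure (density L (\<lambda>x. ennreal (pp x))) (space L)"
      using ppm by (intro emeasure_density_space_nn[symmetric]) auto
    also have "\<dots> = 1" using PL[symmetric] spL spP PP.emeasure_space_1 by simp
    finally show ?thesis .
  qed
  have intb: "(\<integral>\<^sup>+ x. ennreal (b j x) \<partial>L) = 1" if "j < V" for j
  proof -
    have "(\<integral>\<^sup>+ x. ennreal (b j x) \<partial>L) = emeasure (density L (\<lambda>x. ennreal (b j x))) (space L)"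
      using bm[OF that] by (intro emeasure_density_space_nn[symmetric]) auto
    also have "\<dots> = 1" using QL[OF that, symmetric] spL prob_density_total(1)[OF dq[OF that]] by simp
    finally show ?thesis .
  qed
  have Ifin: "I j < \<infinity>" if "j < V" for j
  proof -
    have "I j \<le> (\<integral>\<^sup>+ x. ennreal (pp x) + ennreal (b j x) \<partial>L)"
      unfolding I_def
    proof (rule nn_integral_mono)
      fix x assume x: "x \<in> space L"
      have "F j x \<le> pp x + b j x" unfolding F_def by (rule sq_diff_le[OF pp0 bnn[OF that x]])
      then show "ennreal (F j x) \<le> ennreal (pp x) + ennreal (b j x)"
        using pp0 bnn[OF that x] by (simp add: ennreal_plus[symmetric] del: ennreal_plus)
    qed
    also have "\<dots> = (\<integral>\<^sup>+ x. ennreal (pp x) \<partial>L) + (\<integral>\<^sup>+ x. ennreal (b j x) \<partial>L)"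
      using ppm bm[OF that] by (intro nn_integral_add) auto
    also have "\<dots> = 2" using intpp intb[OF that] by simp
    finally show ?thesis by (simp add: le_less_trans)
  qed
  have I0le: "I0 \<le> ennreal (1 / real V) * (\<Sum>j<V. I j)"
  proof -
    have "I0 \<le> (\<integral>\<^sup>+ x. ennreal (1 / real V) * (\<Sum>j<V. ennreal (F j x)) \<partial>L)"
      unfolding I0_def
    proof (rule nn_integral_mono)
      fix x assume x: "x \<in> space L"
      have "F0 x \<le> (1 / real V) * (\<Sum>j<V. F j x)"
        unfolding F0_def F_def avgb[OF x]
        by (rule convex_pt) (use V pp0 bnn x in auto)
      moreover have "ennreal ((1 / real V) * (\<Sum>j<V. F j x)) = ennreal (1 / real V) * (\<Sum>j<V. ennreal (F j x))"
      proof -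
        have "(\<Sum>j<V. ennreal (F j x)) = ennreal (\<Sum>j<V. F j x)"
          by (rule sum_ennreal) (simp add: F_def)
        moreover have "0 \<le> (\<Sum>j<V. F j x)" by (intro sum_nonneg) (simp add: F_def)
        ultimately show ?thesis using ennreal_mult''[of "\<Sum>j<V. F j x" "1 / real V"] by simp
      qed
      ultimately show "ennreal (F0 x) \<le> ennreal (1 / real V) * (\<Sum>j<V. ennreal (F j x))"
        by (metis ennreal_leI)
    qed
    also have "\<dots> = ennreal (1 / real V) * (\<integral>\<^sup>+ x. (\<Sum>j<V. ennreal (F j x)) \<partial>L)"
      using Fm by (intro nn_integral_cmult) (auto intro!: borel_measurable_sum)
    also have "(\<integral>\<^sup>+ x. (\<Sum>j<V. ennreal (F j x)) \<partial>L) = (\<Sum>j<V. I j)"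
      unfolding I_def using Fm by (intro nn_integral_sum) auto
    finally show ?thesis .
  qed
  define c :: ennreal where "c = 1/2"
  have cfin: "c < \<infinity>" unfolding c_def using ennreal_divide_eq_top_iff[of "1::ennreal" 2] by (simp add: less_top)
  have cIfin: "c * I j < \<infinity>" if "j < V" for j
    using cfin Ifin[OF that] by (simp add: ennreal_mult_less_top)
  have "c * I0 \<le> c * (ennreal (1 / real V) * (\<Sum>j<V. I j))"
    by (intro mult_left_mono I0le) simp
  also have "\<dots> = ennreal (1 / real V) * (\<Sum>j<V. c * I j)"
    by (simp only: sum_distrib_left[symmetric] mult.left_commute)
  also have "(\<Sum>j<V. c * I j) = (\<Sum>j<V. ennreal (enn2real (c * I j)))"
    using cIfin by (intro sum.cong) (auto simp: less_top)
  also have "\<dots> = ennreal (\<Sum>j<V. enn2real (c * I j))"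
    by (rule sum_ennreal) simp
  also have "ennreal (1 / real V) * \<dots> = ennreal ((1 / real V) * (\<Sum>j<V. enn2real (c * I j)))"
    using ennreal_mult''[of "\<Sum>j<V. enn2real (c * I j)" "1 / real V"] by (simp add: sum_nonneg)
  finally have main: "enn2real (c * I0) \<le> (1 / real V) * (\<Sum>j<V. enn2real (c * I j))"
    by (intro enn2real_leI) (auto intro!: sum_nonneg divide_nonneg_nonneg)
  have "hellinger_sq P (density \<mu> (A Xs)) = enn2real (c * I0)"
    using H0 unfolding q0_def c_def by simp
  also have "\<dots> \<le> (1 / real V) * (\<Sum>j<V. enn2real (c * I j))" by (rule main)
  also have "(\<Sum>j<V. enn2real (c * I j)) = (\<Sum>j<V. hellinger_sq P (density \<mu> (A (nths Xs ({0..<n} - B j)))))"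
    using H unfolding q_def Ys_def c_def by (intro sum.cong) auto
  finally show ?thesis .
qed


end
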